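(* Let $\alpha\in(\pi/8,3\pi/8)$ with $\alpha/\pi\notin\mathbb{Q}$, $\beta=\alpha-\pi/2$, $\rho=0.01$, $A_1=\rho R(\alpha)$, $A_2=\rho R(\beta)$ where $R(\theta)=\begin{bmatrix}\cos\theta&-\sin\theta\\ \sin\theta&\cos\theta\end{bmatrix}$, and $c(x)=x_1^2+2x_2^2$ on $\mathbb{R}^2$. Let $J^\star$ be the optimal value function, $\tilde J^\star(\theta)=J^\star([\cos\theta,\sin\theta]^\top)$, $\Delta\tilde J^\star(\theta)=\tilde J^\star(\theta+\alpha)-\tilde J^\star(\theta+\beta)$, $\mu=\pi/4-\alpha$, $\delta=0.01$, and let $\nu\in(\mu-\delta,\mu+\delta)$ satisfy $\Delta\tilde J^\star(\nu)=0$. Let $I=[\nu+\beta,\nu+\alpha)$ and $T:I\to I$ be defined by $T(\theta)=\theta+\alpha$ if $\theta<\nu$ and $T(\theta)=\theta+\beta$ if $\theta\geq\nu$. Then for every $k\in\mathbb{N}$, $\tilde J^\star$ is not differentiable at $T^{-k}\nu$.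
   Context: $T$ is a bijection of $I$ (an interval exchange map), so $T^{-k}$ is well defined. For the switched linear system $\xi(t+1)=A_{\sigma(t)}\xi(t)$ with $\sigma:\mathbb{N}\to\{1,2\}$, $J^\star(x)=\inf_\sigma\sum_{t=0}^\infty c(\xi(t,x,\sigma))$ where $\xi(t,x,\sigma)$ is the solution with $\xi(0)=x$. *)

theory Defs
  imports "HOL-Analysis.Analysis"
begin

definition rot :: "real \<Rightarrow> real^2^2" where
  "rot \<theta> = vector [vector [cos \<theta>, - sin \<theta>], vector [sin \<theta>, cos \<theta>]]"

definition sysA :: "real \<Rightarrow> real \<Rightarrow> nat \<Rightarrow> real^2^2" where
  "sysA \<rho> \<alpha> i = (if i = 1 then \<rho> *\<^sub>R rot \<alpha> else \<rho> *\<^sub>R rot (\<alpha> - pi/2))"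

definition cost :: "real^2 \<Rightarrow> real" where
  "cost x = (x$1)^2 + 2 * (x$2)^2"

primrec traj :: "(nat \<Rightarrow> real^2^2) \<Rightarrow> (nat \<Rightarrow> nat) \<Rightarrow> real^2 \<Rightarrow> nat \<Rightarrow> real^2" where
  "traj A \<sigma> x 0 = x"
| "traj A \<sigma> x (Suc t) = A (\<sigma> t) *v traj A \<sigma> x t"

definition switching_signals :: "(nat \<Rightarrow> nat) set" where
  "switching_signals = {\<sigma>. \<forall>t. \<sigma> t \<in> {1,2}}"

definition Jstar :: "real \<Rightarrow> real \<Rightarrow> real^2 \<Rightarrow> real" where
  "Jstar \<rho> \<alpha> x = (INF \<sigma>\<in>switching_signals. (\<Sum>t. cost (traj (sysA \<rho> \<alpha>) \<sigma> x t)))"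

definition Jtilde :: "real \<Rightarrow> real \<Rightarrow> real \<Rightarrow> real" where
  "Jtilde \<rho> \<alpha> \<theta> = Jstar \<rho> \<alpha> (vector [cos \<theta>, sin \<theta>])"

definition DeltaJtilde :: "real \<Rightarrow> real \<Rightarrow> real \<Rightarrow> real" where
  "DeltaJtilde \<rho> \<alpha> \<theta> = Jtilde \<rho> \<alpha> (\<theta> + \<alpha>) - Jtilde \<rho> \<alpha> (\<theta> + (\<alpha> - pi/2))"

definition Tmap :: "real \<Rightarrow> real \<Rightarrow> real \<Rightarrow> real" where
  "Tmap \<alpha> \<nu> \<theta> = (if \<theta> < \<nu> then \<theta> + \<alpha> else \<theta> + (\<alpha> - pi/2))"

definition Iint :: "real \<Rightarrow> real \<Rightarrow> real set" where
  "Iint \<alpha> \<nu> = {\<nu> + (\<alpha> - pi/2) ..< \<nu> + \<alpha>}"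

definition Tinv_iter :: "real \<Rightarrow> real \<Rightarrow> nat \<Rightarrow> real" where
  "Tinv_iter \<alpha> \<nu> k = (inv_into (Iint \<alpha> \<nu>) (Tmap \<alpha> \<nu>) ^^ k) \<nu>"

end

theory Submission
  imports Defs
begin


definition ang :: "real \<Rightarrow> nat \<Rightarrow> real" where
  "ang \<alpha> i = (if i = 1 then \<alpha> else \<alpha> - pi/2)"

definition ssum :: "real \<Rightarrow> (nat \<Rightarrow> nat) \<Rightarrow> nat \<Rightarrow> real" where
  "ssum \<alpha> \<sigma> t = (\<Sum>i<t. ang \<alpha> (\<sigma> i))"

definition rr :: real where "rr = 1/10000"

definition CS :: "real \<Rightarrow> (nat \<Rightarrow> nat) \<Rightarrow> real \<Rightarrow> real" where
  "CS \<alpha> \<sigma> \<theta> = (\<Sum>t. rr^t * (1 + sin (\<theta> + ssum \<alpha> \<sigma> t) ^ 2))"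

lemma rot_mult: "rot \<phi> *v vector [cos a, sin a] = (vector [cos (a + \<phi>), sin (a + \<phi>)] :: real^2)"
  unfolding rot_def
  by (simp add: vec_eq_iff matrix_vector_mult_def forall_2 sum_2 cos_add sin_add algebra_simps)

lemma sysA_mult: "sysA \<rho> \<alpha> i *v vector [cos a, sin a] = \<rho> *\<^sub>R (vector [cos (a + ang \<alpha> i), sin (a + ang \<alpha> i)] :: real^2)"
  unfolding sysA_def ang_def
  by (simp add: scaleR_matrix_vector_assoc[symmetric] rot_mult)

lemma traj_eq: "traj (sysA \<rho> \<alpha>) \<sigma> (vector [cos \<theta>, sin \<theta>]) t
   = (\<rho>^t) *\<^sub>R (vector [cos (\<theta> + ssum \<alpha> \<sigma> t), sin (\<theta> + ssum \<alpha> \<sigma> t)] :: real^2)"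
  unfolding ssum_def
  by (induction t) (simp_all add: matrix_vector_mult_scaleR sysA_mult add.assoc)

lemma cost_eq: "cost (c *\<^sub>R (vector [cos b, sin b] :: real^2)) = c^2 * (1 + sin b ^ 2)"
proof -
  have "c^2 * (cos b)^2 + c^2 * (sin b)^2 = c^2"
    by (metis distrib_left sin_cos_squared_add2 mult_1_right)
  then show ?thesis unfolding cost_def by (simp add: power_mult_distrib algebra_simps)
qed

lemma pw_rr: "((0.01::real)^t)^2 = rr^t"
proof -
  have "((0.01::real)^t)^2 = ((0.01::real)^2)^t" by (metis power_mult mult.commute)
  moreover have "(0.01::real)^2 = rr" by (simp add: rr_def power2_eq_square)
  ultimately show ?thesis by simp
qed

lemma Jtilde_CS: "Jtilde 0.01 \<alpha> \<theta> = (INF \<sigma>\<in>switching_signals. CS \<alpha> \<sigma> \<theta>)"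
proof -
  have h: "(\<lambda>t. cost (traj (sysA 0.01 \<alpha>) \<sigma> (vector [cos \<theta>, sin \<theta>]) t))
       = (\<lambda>t. rr^t * (1 + sin (\<theta> + ssum \<alpha> \<sigma> t) ^ 2))" for \<sigma>
    by (simp only: traj_eq cost_eq pw_rr)
  show ?thesis
    unfolding Jtilde_def Jstar_def CS_def h ..
qed

lemma rr_facts: "0 < rr" "rr < 1" "rr = 1/10000"
  by (auto simp: rr_def)

lemma summable_geo_rr: "summable (\<lambda>t. c * rr^t)"
  using rr_facts by (intro summable_mult summable_geometric) auto

lemma summable_CS: "summable (\<lambda>t. rr^t * (1 + sin (\<theta> + ssum \<alpha> \<sigma> t) ^ 2))"
proof (rule summable_comparison_test'[OF summable_geo_rr[of 2]])
  fix n :: nat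
  have "sin (\<theta> + ssum \<alpha> \<sigma> n) ^ 2 \<le> 1" by (simp add: abs_square_le_1)
  then show "norm (rr^n * (1 + sin (\<theta> + ssum \<alpha> \<sigma> n) ^ 2)) \<le> 2 * rr^n"
    using rr_facts by (simp add: abs_mult)
qed

lemma CS_nonneg: "0 \<le> CS \<alpha> \<sigma> \<theta>"
  unfolding CS_def using rr_facts
  by (intro suminf_nonneg summable_CS) auto

lemma ssum_Suc: "ssum \<alpha> \<sigma> (Suc t) = ang \<alpha> (\<sigma> 0) + ssum \<alpha> (\<sigma> \<circ> Suc) t"
  unfolding ssum_def by (simp only: sum.lessThan_Suc_shift) simp

lemma CS_shift: "CS \<alpha> \<sigma> \<theta> = 1 + sin \<theta> ^ 2 + rr * CS \<alpha> (\<sigma> \<circ> Suc) (\<theta> + ang \<alpha> (\<sigma> 0))"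
proof -
  let ?F = "\<lambda>t. rr^t * (1 + sin (\<theta> + ssum \<alpha> \<sigma> t) ^ 2)"
  have s: "summable ?F" by (rule summable_CS)
  have "(\<Sum>t. ?F (Suc t)) = suminf ?F - ?F 0" by (rule suminf_split_head[OF s])
  moreover have "(\<lambda>t. ?F (Suc t)) = (\<lambda>t. rr * (rr^t * (1 + sin ((\<theta> + ang \<alpha> (\<sigma> 0)) + ssum \<alpha> (\<sigma> \<circ> Suc) t) ^ 2)))"
    by (simp add: ssum_Suc add.assoc mult.assoc)
  moreover have "(\<Sum>t. rr * (rr^t * (1 + sin ((\<theta> + ang \<alpha> (\<sigma> 0)) + ssum \<alpha> (\<sigma> \<circ> Suc) t) ^ 2)))
     = rr * CS \<alpha> (\<sigma> \<circ> Suc) (\<theta> + ang \<alpha> (\<sigma> 0))"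
    unfolding CS_def by (rule suminf_mult[OF summable_CS])
  ultimately show ?thesis unfolding CS_def by (simp add: ssum_def)
qed

lemma sin_sq_lip: fixes a b :: real shows "sin a ^ 2 - sin b ^ 2 \<le> 2 * \<bar>a - b\<bar>"
proof -
  have "\<bar>sin a - sin b\<bar> \<le> \<bar>a - b\<bar>"
  proof -
    have "\<bar>sin a - sin b\<bar> = 2 * \<bar>sin ((a - b) / 2)\<bar> * \<bar>cos ((a + b) / 2)\<bar>"
      by (simp add: sin_diff_sin abs_mult)
    also have "\<dots> \<le> 2 * \<bar>(a - b) / 2\<bar> * 1"
      by (intro mult_mono abs_sin_x_le_abs_x) auto
    also have "\<dots> = \<bar>a - b\<bar>" by simp
    finally show ?thesis .
  qed
  moreover have "\<bar>sin a + sin b\<bar> \<le> 2"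
    using abs_triangle_ineq[of "sin a" "sin b"] abs_sin_le_one[of a] abs_sin_le_one[of b] by linarith  
  ultimately have "\<bar>(sin a - sin b) * (sin a + sin b)\<bar> \<le> \<bar>a - b\<bar> * 2"
    by (simp add: abs_mult mult_mono')
  then show ?thesis by (simp add: power2_eq_square algebra_simps)
qed

lemma CS_lip: "CS \<alpha> \<sigma> x - CS \<alpha> \<sigma> y \<le> 3 * \<bar>x - y\<bar>"
proof -
  let ?a = "\<lambda>t. rr^t * (1 + sin (x + ssum \<alpha> \<sigma> t) ^ 2)"
  let ?b = "\<lambda>t. rr^t * (1 + sin (y + ssum \<alpha> \<sigma> t) ^ 2)"
  have "CS \<alpha> \<sigma> x - CS \<alpha> \<sigma> y = (\<Sum>t. ?a t - ?b t)"
    unfolding CS_def by (rule suminf_diff) (rule summable_CS)+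
  also have "\<dots> \<le> (\<Sum>t. (2 * \<bar>x - y\<bar>) * rr^t)"
  proof (rule suminf_le)
    fix t
    have "sin (x + ssum \<alpha> \<sigma> t) ^ 2 - sin (y + ssum \<alpha> \<sigma> t) ^ 2 \<le> 2 * \<bar>x - y\<bar>"
      using sin_sq_lip[of "x + ssum \<alpha> \<sigma> t" "y + ssum \<alpha> \<sigma> t"] by simp
    then have "rr^t * (sin (x + ssum \<alpha> \<sigma> t) ^ 2 - sin (y + ssum \<alpha> \<sigma> t) ^ 2) \<le> rr^t * (2 * \<bar>x - y\<bar>)"
      using rr_facts by (intro mult_left_mono) auto
    then show "?a t - ?b t \<le> (2 * \<bar>x - y\<bar>) * rr^t" by (simp add: algebra_simps)
  next
    show "summable (\<lambda>t. ?a t - ?b t)" by (intro summable_diff summable_CS)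
  qed (rule summable_geo_rr)
  also have "\<dots> = (2 * \<bar>x - y\<bar>) * (1 / (1 - rr))"
    using rr_facts by (subst suminf_mult[OF summable_geometric]) (auto simp: suminf_geometric)
  also have "\<dots> \<le> 3 * \<bar>x - y\<bar>"
    by (simp add: rr_def field_simps)
  finally show ?thesis .
qed

lemma sin_sq_semi: fixes a h :: real shows "sin (a + h) ^ 2 + sin (a - h) ^ 2 - 2 * sin a ^ 2 \<le> 2 * h ^ 2"
proof -
  have e: "sin (a + h) ^ 2 + sin (a - h) ^ 2 - 2 * sin a ^ 2 = cos (2*a) * (2 * sin h ^ 2)"
  proof -
    have "sin (a + h) ^ 2 + sin (a - h) ^ 2 = 2 * (sin a)^2 * (cos h)^2 + 2 * (cos a)^2 * (sin h)^2"
      by (simp add: sin_add sin_diff power2_eq_square algebra_simps)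
    moreover have "cos h ^ 2 = 1 - sin h ^ 2" by (simp add: cos_squared_eq)
    ultimately have "sin (a + h) ^ 2 + sin (a - h) ^ 2 - 2 * sin a ^ 2
       = 2 * (sin a)^2 * (1 - (sin h)^2) + 2 * (cos a)^2 * (sin h)^2 - 2 * sin a ^2" by simp
    also have "\<dots> = ((cos a)^2 - (sin a)^2) * (2 * (sin h)^2)" by (simp add: algebra_simps)
    also have "\<dots> = cos (2*a) * (2 * sin h ^ 2)" by (simp add: cos_double)
    finally show ?thesis .
  qed
  have "cos (2*a) * (2 * sin h ^ 2) \<le> 1 * (2 * sin h ^ 2)"
    by (intro mult_right_mono) auto
  also have "\<dots> \<le> 2 * h^2"
    using abs_sin_x_le_abs_x[of h] by (simp add: abs_le_square_iff)
  finally show ?thesis using e by simp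
qed



abbreviation "SS \<equiv> switching_signals"

definition JJ :: "real \<Rightarrow> real \<Rightarrow> real" where "JJ \<alpha> \<theta> = Jtilde 0.01 \<alpha> \<theta>"

lemma SS_ne: "(\<lambda>_. 1) \<in> SS" by (simp add: switching_signals_def)

lemma bdd_CS: "bdd_below ((\<lambda>\<sigma>. CS \<alpha> \<sigma> \<theta>) ` A)"
  by (rule bdd_belowI[of _ 0]) (auto simp: CS_nonneg)

lemma f_le: "\<sigma> \<in> SS \<Longrightarrow> JJ \<alpha> \<theta> \<le> CS \<alpha> \<sigma> \<theta>"
  unfolding JJ_def Jtilde_CS by (rule cINF_lower[OF bdd_CS])

lemma f_ge: "(\<And>\<sigma>. \<sigma> \<in> SS \<Longrightarrow> c \<le> CS \<alpha> \<sigma> \<theta>) \<Longrightarrow> c \<le> JJ \<alpha> \<theta>"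
  unfolding JJ_def Jtilde_CS using SS_ne by (intro cINF_greatest) auto

lemma f_lip1: "JJ \<alpha> x - JJ \<alpha> y \<le> 3 * \<bar>x - y\<bar>"
proof -
  have "JJ \<alpha> x - 3 * \<bar>x - y\<bar> \<le> JJ \<alpha> y"
  proof (rule f_ge)
    fix \<sigma> assume "\<sigma> \<in> SS"
    then have "JJ \<alpha> x \<le> CS \<alpha> \<sigma> x" by (rule f_le)
    then show "JJ \<alpha> x - 3 * \<bar>x - y\<bar> \<le> CS \<alpha> \<sigma> y" using CS_lip[of \<alpha> \<sigma> x y] by linarith
  qed
  then show ?thesis by linarith
qed

lemma f_lip: "\<bar>JJ \<alpha> x - JJ \<alpha> y\<bar> \<le> 3 * \<bar>x - y\<bar>"
  using f_lip1[of \<alpha> x y] f_lip1[of \<alpha> y x] by (simp add: abs_minus_commute)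

lemma CS_semi: "CS \<alpha> \<sigma> (x + h) + CS \<alpha> \<sigma> (x - h) - 2 * CS \<alpha> \<sigma> x \<le> 3 * h^2"
proof -
  let ?a = "\<lambda>t. rr^t * (1 + sin (x + h + ssum \<alpha> \<sigma> t) ^ 2)"
  let ?b = "\<lambda>t. rr^t * (1 + sin (x - h + ssum \<alpha> \<sigma> t) ^ 2)"
  let ?c = "\<lambda>t. rr^t * (1 + sin (x + ssum \<alpha> \<sigma> t) ^ 2)"
  have sa: "summable ?a" and sb: "summable ?b" and sc: "summable ?c" by (rule summable_CS)+
  have "CS \<alpha> \<sigma> (x + h) + CS \<alpha> \<sigma> (x - h) - 2 * CS \<alpha> \<sigma> x
      = (suminf ?a - suminf ?c) - (suminf ?c - suminf ?b)"
    unfolding CS_def by simp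
  also have "\<dots> = (\<Sum>t. ?a t - ?c t) - (\<Sum>t. ?c t - ?b t)"
    using suminf_diff[OF sa sc] suminf_diff[OF sc sb] by simp
  also have "\<dots> = (\<Sum>t. (?a t - ?c t) - (?c t - ?b t))"
    by (rule suminf_diff) (intro summable_diff sa sb sc)+
  also have "\<dots> \<le> (\<Sum>t. (2 * h^2) * rr^t)"
  proof (rule suminf_le)
    fix t
    have "sin (x + ssum \<alpha> \<sigma> t + h) ^ 2 + sin (x + ssum \<alpha> \<sigma> t - h) ^ 2 - 2 * sin (x + ssum \<alpha> \<sigma> t) ^ 2 \<le> 2 * h^2"
      by (rule sin_sq_semi)
    then have "rr^t * (sin (x + ssum \<alpha> \<sigma> t + h) ^ 2 + sin (x + ssum \<alpha> \<sigma> t - h) ^ 2 - 2 * sin (x + ssum \<alpha> \<sigma> t) ^ 2) \<le> rr^t * (2 * h^2)"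
      using rr_facts by (intro mult_left_mono) auto
    then show "(?a t - ?c t) - (?c t - ?b t) \<le> (2 * h^2) * rr^t"
      by (simp add: algebra_simps)
  next
    show "summable (\<lambda>t. (?a t - ?c t) - (?c t - ?b t))" by (intro summable_diff sa sb sc)
  qed (rule summable_geo_rr)
  also have "\<dots> = (2 * h^2) * (1 / (1 - rr))"
    using rr_facts by (subst suminf_mult[OF summable_geometric]) (auto simp: suminf_geometric)
  also have "\<dots> \<le> 3 * h^2"
    by (simp add: rr_def field_simps)
  finally show ?thesis .
qed

lemma f_semi: "JJ \<alpha> (x + h) + JJ \<alpha> (x - h) - 2 * JJ \<alpha> x \<le> 3 * h^2"
proof -
  have "(JJ \<alpha> (x + h) + JJ \<alpha> (x - h) - 3 * h^2) / 2 \<le> JJ \<alpha> x"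
  proof (rule f_ge)
    fix \<sigma> assume "\<sigma> \<in> SS"
    then show "(JJ \<alpha> (x + h) + JJ \<alpha> (x - h) - 3 * h^2) / 2 \<le> CS \<alpha> \<sigma> x"
    proof -
      have "JJ \<alpha> (x + h) + JJ \<alpha> (x - h) - 3 * h^2 \<le> 2 * CS \<alpha> \<sigma> x"
        using f_le[OF \<open>\<sigma> \<in> SS\<close>, of \<alpha> "x+h"] f_le[OF \<open>\<sigma> \<in> SS\<close>, of \<alpha> "x-h"] CS_semi[of \<alpha> \<sigma> x h] by linarith
      then show ?thesis by (simp add: field_simps)
    qed
  qed
  then show ?thesis by (simp add: field_simps)
qed

lemma bell_ge: "1 + sin \<theta> ^ 2 + rr * min (JJ \<alpha> (\<theta> + \<alpha>)) (JJ \<alpha> (\<theta> + (\<alpha> - pi/2))) \<le> JJ \<alpha> \<theta>"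
proof (rule f_ge)
  fix \<sigma> assume s: "\<sigma> \<in> SS"
  then have s': "\<sigma> \<circ> Suc \<in> SS" by (simp add: switching_signals_def)
  have "min (JJ \<alpha> (\<theta> + \<alpha>)) (JJ \<alpha> (\<theta> + (\<alpha> - pi/2))) \<le> JJ \<alpha> (\<theta> + ang \<alpha> (\<sigma> 0))"
    by (simp add: ang_def)
  also have "\<dots> \<le> CS \<alpha> (\<sigma> \<circ> Suc) (\<theta> + ang \<alpha> (\<sigma> 0))" by (rule f_le[OF s'])
  finally have "rr * min (JJ \<alpha> (\<theta> + \<alpha>)) (JJ \<alpha> (\<theta> + (\<alpha> - pi/2))) \<le> rr * CS \<alpha> (\<sigma> \<circ> Suc) (\<theta> + ang \<alpha> (\<sigma> 0))"
    using rr_facts by (intro mult_left_mono) auto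
  then show "1 + sin \<theta> ^ 2 + rr * min (JJ \<alpha> (\<theta> + \<alpha>)) (JJ \<alpha> (\<theta> + (\<alpha> - pi/2))) \<le> CS \<alpha> \<sigma> \<theta>"
    using CS_shift[of \<alpha> \<sigma> \<theta>] by linarith
qed

lemma bell_le_i: assumes "i \<in> {1,2}"
  shows "JJ \<alpha> \<theta> \<le> 1 + sin \<theta> ^ 2 + rr * JJ \<alpha> (\<theta> + ang \<alpha> i)"
proof -
  have "(JJ \<alpha> \<theta> - 1 - sin \<theta> ^ 2) / rr \<le> JJ \<alpha> (\<theta> + ang \<alpha> i)"
  proof (rule f_ge)
    fix \<tau> assume t: "\<tau> \<in> SS"
    define \<sigma> where "\<sigma> = (\<lambda>t. case t of 0 \<Rightarrow> i | Suc n \<Rightarrow> \<tau> n)"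
    have "\<sigma> \<in> SS" using t assms by (auto simp: switching_signals_def \<sigma>_def split: nat.split)
    then have "JJ \<alpha> \<theta> \<le> CS \<alpha> \<sigma> \<theta>" by (rule f_le)
    moreover have "\<sigma> \<circ> Suc = \<tau>" "\<sigma> 0 = i" by (auto simp: \<sigma>_def)
    ultimately have "JJ \<alpha> \<theta> \<le> 1 + sin \<theta> ^ 2 + rr * CS \<alpha> \<tau> (\<theta> + ang \<alpha> i)"
      using CS_shift[of \<alpha> \<sigma> \<theta>] by simp
    then show "(JJ \<alpha> \<theta> - 1 - sin \<theta> ^ 2) / rr \<le> CS \<alpha> \<tau> (\<theta> + ang \<alpha> i)"
      using rr_facts by (simp add: divide_le_eq algebra_simps)
  qed
  then show ?thesis using rr_facts by (simp add: divide_le_eq algebra_simps)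
qed

lemma bellman: "JJ \<alpha> \<theta> = 1 + sin \<theta> ^ 2 + rr * min (JJ \<alpha> (\<theta> + \<alpha>)) (JJ \<alpha> (\<theta> + (\<alpha> - pi/2)))"
proof -
  have a: "JJ \<alpha> \<theta> \<le> 1 + sin \<theta> ^ 2 + rr * JJ \<alpha> (\<theta> + \<alpha>)"
    using bell_le_i[of 1 \<alpha> \<theta>] by (simp add: ang_def)
  have b: "JJ \<alpha> \<theta> \<le> 1 + sin \<theta> ^ 2 + rr * JJ \<alpha> (\<theta> + (\<alpha> - pi/2))"
    using bell_le_i[of 2 \<alpha> \<theta>] by (simp add: ang_def)
  note c = bell_ge[of \<theta> \<alpha>]
  show ?thesis
  proof (cases "JJ \<alpha> (\<theta> + \<alpha>) \<le> JJ \<alpha> (\<theta> + (\<alpha> - pi/2))")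
    case True
    then have e: "min (JJ \<alpha> (\<theta> + \<alpha>)) (JJ \<alpha> (\<theta> + (\<alpha> - pi/2))) = JJ \<alpha> (\<theta> + \<alpha>)"
      by (rule min_absorb1)
    show ?thesis using a c unfolding e by (rule order_antisym)
  next
    case False
    then have "min (JJ \<alpha> (\<theta> + \<alpha>)) (JJ \<alpha> (\<theta> + (\<alpha> - pi/2))) = JJ \<alpha> (\<theta> + (\<alpha> - pi/2))"
      by (intro min_absorb2) linarith
    then have e: "min (JJ \<alpha> (\<theta> + \<alpha>)) (JJ \<alpha> (\<theta> + (\<alpha> - pi/2))) = JJ \<alpha> (\<theta> + (\<alpha> - pi/2))" .
    show ?thesis using b c unfolding e by (rule order_antisym)
  qed
qed



lemma cos_lb: fixes y :: real assumes "\<bar>y\<bar> \<le> 5/4" shows "cos y \<ge> 1/5"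
proof -
  have "cos y = cos (2 * (y/2))" by simp
  also have "\<dots> = 1 - 2 * sin (y/2) ^ 2" by (rule cos_double_sin)
  finally have e: "cos y = 1 - 2 * sin (y/2) ^ 2" .
  have "sin (y/2) ^ 2 \<le> (y/2)^2"
    using abs_sin_x_le_abs_x[of "y/2"] abs_le_square_iff by blast
  moreover have "\<bar>y/2\<bar> \<le> \<bar>5/8\<bar>" using assms by simp
  then have "(y/2)^2 \<le> (5/8)^2" using abs_le_square_iff by blast
  ultimately show ?thesis using e by (simp add: power2_eq_square)
qed

lemma sin_lb: fixes x :: real assumes "0 \<le> x" "x \<le> 5/4" shows "sin x \<ge> 7/10 * x"
proof -
  have "\<bar>sin x - (\<Sum>m<3. sin_coeff m * x ^ m)\<bar> \<le> inverse (fact 3) * \<bar>x\<bar> ^ 3"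
    by (rule Maclaurin_sin_bound)
  moreover have "(\<Sum>m<3. sin_coeff m * x ^ m) = x"
    by (simp add: numeral_3_eq_3 sin_coeff_def)
  moreover have "fact 3 = (6::real)" by (simp add: numeral_3_eq_3)
  ultimately have "\<bar>sin x - x\<bar> \<le> x^3 / 6" using assms by (simp add: field_simps)
  then have "sin x \<ge> x - x^3 / 6" using abs_ge_minus_self[of "sin x - x"] by linarith
  moreover have "x^3 \<le> x * (9/5)"
  proof -
    have "x * x \<le> 5/4 * (5/4)" using assms by (intro mult_mono) auto
    then have "x * (x * x) \<le> x * (9/5)" using assms by (intro mult_left_mono) auto
    then show ?thesis by (simp add: power3_eq_cube)
  qed
  ultimately show ?thesis by linarith
qed

lemma pi_bounds: "314/100 < pi" "pi < 31416/10000" using pi_approx by auto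

lemma dec: "(0.01::real) = 1/100" by simp

context
  fixes \<alpha> \<nu> :: real
  assumes a1: "pi/8 < \<alpha>" and a2: "\<alpha> < 3*pi/8"
    and n1: "(pi/4 - \<alpha>) - 1/100 < \<nu>" and n2: "\<nu> < (pi/4 - \<alpha>) + 1/100"
begin

lemma Dtrig:
  shows "(sin (\<nu>+x+\<alpha>) ^ 2 - sin (\<nu>+x+(\<alpha>-pi/2)) ^ 2) - (sin (\<nu>+\<alpha>) ^ 2 - sin (\<nu>+(\<alpha>-pi/2)) ^ 2)
     = 2 * cos (2*\<nu>+2*\<alpha>+x-pi/2) * sin x"
proof -
  have q: "sin z ^ 2 - sin (z - pi/2) ^ 2 = - cos (2*z)" for z
    by (simp add: sin_diff cos_double)
  have "(sin (\<nu>+x+\<alpha>) ^ 2 - sin (\<nu>+x+(\<alpha>-pi/2)) ^ 2) = - cos (2*(\<nu>+x+\<alpha>))"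
    using q[of "\<nu>+x+\<alpha>"] by (simp add: algebra_simps)
  moreover have "(sin (\<nu>+\<alpha>) ^ 2 - sin (\<nu>+(\<alpha>-pi/2)) ^ 2) = - cos (2*(\<nu>+\<alpha>))"
    using q[of "\<nu>+\<alpha>"] by (simp add: algebra_simps)
  moreover have "cos (2*(\<nu>+\<alpha>)) - cos (2*(\<nu>+x+\<alpha>)) = 2 * sin (2*\<nu>+2*\<alpha>+x) * sin x"
  proof -
    have h1: "(2*(\<nu>+\<alpha>) + 2*(\<nu>+x+\<alpha>))/2 = 2*\<nu>+2*\<alpha>+x" and h2: "(2*(\<nu>+x+\<alpha>) - 2*(\<nu>+\<alpha>))/2 = x"
      by (simp_all add: field_simps)
    show ?thesis using cos_diff_cos[of "2*(\<nu>+\<alpha>)" "2*(\<nu>+x+\<alpha>)"] by (simp only: h1 h2)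
  qed
  moreover have "sin (2*\<nu>+2*\<alpha>+x) = cos (2*\<nu>+2*\<alpha>+x-pi/2)"
    by (simp add: cos_diff)
  ultimately show ?thesis by simp
qed

lemma Dpos:
  assumes "0 < x" "x < \<alpha> + 1/20"
  shows "(sin (\<nu>+x+\<alpha>) ^ 2 - sin (\<nu>+x+(\<alpha>-pi/2)) ^ 2) - (sin (\<nu>+\<alpha>) ^ 2 - sin (\<nu>+(\<alpha>-pi/2)) ^ 2) \<ge> 28/100 * x"
proof -
  note D = Dtrig[of x]
  have c: "cos (2*\<nu>+2*\<alpha>+x-pi/2) \<ge> 1/5"
    using assms a1 a2 n1 n2 pi_bounds by (intro cos_lb, unfold abs_le_iff, intro conjI; linarith)
  have s: "sin x \<ge> 7/10 * x"
    using assms a1 a2 pi_bounds by (intro sin_lb) linarith+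
  have "1/5 * (7/10 * x) \<le> cos (2*\<nu>+2*\<alpha>+x-pi/2) * sin x"
    using c s assms by (intro mult_mono) auto
  then show ?thesis using D by linarith
qed

lemma Dneg:
  assumes "\<alpha> - pi/2 - 1/20 < x" "x < 0"
  shows "(sin (\<nu>+x+\<alpha>) ^ 2 - sin (\<nu>+x+(\<alpha>-pi/2)) ^ 2) - (sin (\<nu>+\<alpha>) ^ 2 - sin (\<nu>+(\<alpha>-pi/2)) ^ 2) \<le> 28/100 * x"
proof -
  note D = Dtrig[of x]
  have c: "cos (2*\<nu>+2*\<alpha>+x-pi/2) \<ge> 1/5"
    using assms a1 a2 n1 n2 pi_bounds by (intro cos_lb, unfold abs_le_iff, intro conjI; linarith)
  have s: "sin (-x) \<ge> 7/10 * (-x)"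
    using assms a1 a2 pi_bounds by (intro sin_lb) linarith+
  have "1/5 * (7/10 * (-x)) \<le> cos (2*\<nu>+2*\<alpha>+x-pi/2) * (- sin x)"
    using c s assms by (intro mult_mono) auto
  then show ?thesis using D by linarith
qed

end


context
  fixes \<alpha> \<nu> :: real
  assumes a1: "pi/8 < \<alpha>" and a2: "\<alpha> < 3*pi/8"
    and n1: "(pi/4 - \<alpha>) - 1/100 < \<nu>" and n2: "\<nu> < (pi/4 - \<alpha>) + 1/100"
    and d0: "JJ \<alpha> (\<nu> + \<alpha>) = JJ \<alpha> (\<nu> + (\<alpha> - pi/2))"
begin

definition mm :: "real \<Rightarrow> real" where
  "mm x = min (JJ \<alpha> (x + \<alpha>)) (JJ \<alpha> (x + (\<alpha> - pi/2)))"

lemma bell: "JJ \<alpha> x = 1 + sin x ^ 2 + rr * mm x"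
  unfolding mm_def by (rule bellman)

lemma mm_lip1: "mm x - mm y \<le> 3 * \<bar>x - y\<bar>"
proof -
  have A: "JJ \<alpha> (x + \<alpha>) - JJ \<alpha> (y + \<alpha>) \<le> 3 * \<bar>x - y\<bar>"
    using f_lip1[of \<alpha> "x+\<alpha>" "y+\<alpha>"] by simp
  have B: "JJ \<alpha> (x + (\<alpha> - pi/2)) - JJ \<alpha> (y + (\<alpha> - pi/2)) \<le> 3 * \<bar>x - y\<bar>"
    using f_lip1[of \<alpha> "x+(\<alpha> - pi/2)" "y+(\<alpha> - pi/2)"] by simp
  have "mm x \<le> JJ \<alpha> (x + \<alpha>)" "mm x \<le> JJ \<alpha> (x + (\<alpha> - pi/2))" unfolding mm_def by auto
  moreover have "mm y = JJ \<alpha> (y + \<alpha>) \<or> mm y = JJ \<alpha> (y + (\<alpha> - pi/2))" unfolding mm_def by linarith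
  ultimately show ?thesis using A B by linarith
qed

lemma mm_lip: "\<bar>mm x - mm y\<bar> \<le> 3 * \<bar>x - y\<bar>"
  using mm_lip1[of x y] mm_lip1[of y x] by (simp add: abs_minus_commute)

lemma Delta_expand: "JJ \<alpha> (\<nu>+x+\<alpha>) - JJ \<alpha> (\<nu>+x+(\<alpha>-pi/2))
   = ((sin (\<nu>+x+\<alpha>) ^ 2 - sin (\<nu>+x+(\<alpha>-pi/2)) ^ 2) - (sin (\<nu>+\<alpha>) ^ 2 - sin (\<nu>+(\<alpha>-pi/2)) ^ 2))
     + rr * ((mm (\<nu>+x+\<alpha>) - mm (\<nu>+\<alpha>)) - (mm (\<nu>+x+(\<alpha>-pi/2)) - mm (\<nu>+(\<alpha>-pi/2))))"
proof -
  have "0 = JJ \<alpha> (\<nu> + \<alpha>) - JJ \<alpha> (\<nu> + (\<alpha> - pi/2))" using d0 by simp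
  also have "\<dots> = (sin (\<nu>+\<alpha>) ^ 2 - sin (\<nu>+(\<alpha>-pi/2)) ^ 2) + rr * (mm (\<nu>+\<alpha>) - mm (\<nu>+(\<alpha>-pi/2)))"
    using bell[of "\<nu>+\<alpha>"] bell[of "\<nu>+(\<alpha>-pi/2)"] by (simp add: algebra_simps)
  finally have z: "0 = (sin (\<nu>+\<alpha>) ^ 2 - sin (\<nu>+(\<alpha>-pi/2)) ^ 2) + rr * (mm (\<nu>+\<alpha>) - mm (\<nu>+(\<alpha>-pi/2)))" .
  have "JJ \<alpha> (\<nu>+x+\<alpha>) - JJ \<alpha> (\<nu>+x+(\<alpha>-pi/2)) = (sin (\<nu>+x+\<alpha>) ^ 2 - sin (\<nu>+x+(\<alpha>-pi/2)) ^ 2) + rr * (mm (\<nu>+x+\<alpha>) - mm (\<nu>+x+(\<alpha>-pi/2)))"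
    using bell[of "\<nu>+x+\<alpha>"] bell[of "\<nu>+x+(\<alpha>-pi/2)"] by (simp add: algebra_simps)
  with z show ?thesis by (simp add: algebra_simps)
qed

lemma Err_bound: "\<bar>rr * ((mm (\<nu>+x+\<alpha>) - mm (\<nu>+\<alpha>)) - (mm (\<nu>+x+(\<alpha>-pi/2)) - mm (\<nu>+(\<alpha>-pi/2))))\<bar> \<le> 6/10000 * \<bar>x\<bar>"
proof -
  have "\<bar>mm (\<nu>+x+\<alpha>) - mm (\<nu>+\<alpha>)\<bar> \<le> 3 * \<bar>x\<bar>" using mm_lip[of "\<nu>+x+\<alpha>" "\<nu>+\<alpha>"] by simp
  moreover have "\<bar>mm (\<nu>+x+(\<alpha>-pi/2)) - mm (\<nu>+(\<alpha>-pi/2))\<bar> \<le> 3 * \<bar>x\<bar>"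
    using mm_lip[of "\<nu>+x+(\<alpha>-pi/2)" "\<nu>+(\<alpha>-pi/2)"] by simp
  ultimately have "\<bar>(mm (\<nu>+x+\<alpha>) - mm (\<nu>+\<alpha>)) - (mm (\<nu>+x+(\<alpha>-pi/2)) - mm (\<nu>+(\<alpha>-pi/2)))\<bar> \<le> 6 * \<bar>x\<bar>"
    by linarith
  then show ?thesis by (simp add: rr_def abs_mult)
qed

lemma Delta_pos: assumes "0 < x" "x < \<alpha> + 1/20"
  shows "JJ \<alpha> (\<nu>+x+\<alpha>) - JJ \<alpha> (\<nu>+x+(\<alpha>-pi/2)) \<ge> x / 10"
  using Delta_expand[of x] Err_bound[of x] Dpos[OF a1 a2 n1 n2 assms] assms by (simp add: abs_le_iff)

lemma Delta_neg: assumes "\<alpha> - pi/2 - 1/20 < x" "x < 0"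
  shows "JJ \<alpha> (\<nu>+x+\<alpha>) - JJ \<alpha> (\<nu>+x+(\<alpha>-pi/2)) \<le> x / 10"
  using Delta_expand[of x] Err_bound[of x] Dneg[OF a1 a2 n1 n2 assms] assms by (simp add: abs_le_iff)


lemma kink: "\<not> JJ \<alpha> differentiable (at \<nu>)"
proof
  assume "JJ \<alpha> differentiable (at \<nu>)"
  then obtain D where dJ: "DERIV (JJ \<alpha>) \<nu> :> D" using real_differentiable_def by blast
  then have "DERIV (JJ \<alpha>) (\<nu> + 0) :> D" by simp
  then have dJs: "((\<lambda>h. JJ \<alpha> (\<nu> + h)) has_field_derivative D * 1) (at 0)"
    by (rule DERIV_chain2) (auto intro!: derivative_eq_intros)
  define \<phi> where "\<phi> h = mm (\<nu>+h)" for h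
  have \<phi>_eq: "\<phi> = (\<lambda>h. (JJ \<alpha> (\<nu>+h) - 1 - sin (\<nu>+h)^2)/rr)"
    using bell rr_facts by (auto simp: \<phi>_def fun_eq_iff field_simps)
  have "(\<phi> has_field_derivative (D - 2 * sin \<nu> * cos \<nu>)/rr) (at 0)"
    unfolding \<phi>_eq using rr_facts by (auto intro!: derivative_eq_intros dJs)
  then obtain E where dphi: "DERIV \<phi> 0 :> E" by blast
  then have "DERIV \<phi> (- 0) :> E" by simp
  then have dm: "((\<lambda>h. \<phi> (- h)) has_field_derivative E * (-1)) (at 0)"
    by (rule DERIV_chain2) (auto intro!: derivative_eq_intros)
  have "((\<lambda>h. \<phi> h + \<phi> (- h)) has_field_derivative E + E * (-1)) (at 0)"
    by (rule DERIV_add[OF dphi dm])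
  then have "((\<lambda>h. ((\<phi> (0 + h) + \<phi> (- (0 + h))) - (\<phi> 0 + \<phi> (- 0))) / h) \<longlongrightarrow> 0) (at 0)"
    unfolding DERIV_def by simp
  then have L0: "((\<lambda>h. (\<phi> h + \<phi> (- h) - 2 * \<phi> 0) / h) \<longlongrightarrow> 0) (at 0)"
    by (simp add: algebra_simps)
  then have L: "((\<lambda>h. (\<phi> h + \<phi> (- h) - 2 * \<phi> 0) / h) \<longlongrightarrow> 0) (at_right 0)"
    by (rule tendsto_within_subset) auto
  have L2: "((\<lambda>h. 3 * h - 1/10) \<longlongrightarrow> 3 * 0 - 1/10) (at_right (0::real))"
    by (intro tendsto_intros)
  define h0 where "h0 = min \<alpha> (pi/2 - \<alpha>)"
  have h0pos: "0 < h0" using a1 a2 pi_bounds by (simp add: h0_def)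
  have key: "\<phi> h + \<phi> (- h) - 2 * \<phi> 0 \<le> 3 * h^2 - h / 10" if h: "0 < h" "h < h0" for h
  proof -
    have semi: "JJ \<alpha> (\<nu> + \<alpha> + h) + JJ \<alpha> (\<nu> + \<alpha> - h) - 2 * JJ \<alpha> (\<nu> + \<alpha>) \<le> 3 * h^2"
      by (rule f_semi)
    have hp: "JJ \<alpha> (\<nu>+h+\<alpha>) - JJ \<alpha> (\<nu>+h+(\<alpha>-pi/2)) \<ge> h / 10"
      using h by (intro Delta_pos) (auto simp: h0_def)
    have hn: "JJ \<alpha> (\<nu>+(-h)+\<alpha>) - JJ \<alpha> (\<nu>+(-h)+(\<alpha>-pi/2)) \<le> (-h) / 10"
      using h a1 a2 pi_bounds by (intro Delta_neg) (auto simp: h0_def)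
    have e1: "\<nu> + \<alpha> + h = \<nu>+h+\<alpha>" "\<nu> + \<alpha> - h = \<nu>+(-h)+\<alpha>" by simp_all
    have m1: "\<phi> h \<le> JJ \<alpha> (\<nu>+h+(\<alpha>-pi/2))" unfolding \<phi>_def mm_def by (simp add: add.assoc)
    have m2: "\<phi> (-h) = JJ \<alpha> (\<nu>+(-h)+\<alpha>)"
      unfolding \<phi>_def mm_def using hn h by (simp add: add.assoc min_def)
    have m3: "\<phi> 0 = JJ \<alpha> (\<nu> + \<alpha>)"
      unfolding \<phi>_def mm_def using d0 by simp
    show ?thesis using semi hp m1 m2 m3 unfolding e1 by linarith
  qed
  have ev: "eventually (\<lambda>h. (\<phi> h + \<phi> (- h) - 2 * \<phi> 0) / h \<le> 3 * h - 1/10) (at_right 0)"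
    using eventually_at_right_real[OF h0pos]
  proof (rule eventually_mono)
    fix h assume "h \<in> {0<..<h0}"
    then have h: "0 < h" "h < h0" by auto
    have "(\<phi> h + \<phi> (- h) - 2 * \<phi> 0) / h \<le> (3 * h^2 - h / 10) / h"
      using key[OF h] h by (intro divide_right_mono) auto
    also have "\<dots> = 3 * h - 1/10" using h by (simp add: field_simps power2_eq_square)
    finally show "(\<phi> h + \<phi> (- h) - 2 * \<phi> 0) / h \<le> 3 * h - 1/10" .
  qed
  have "0 \<le> 3 * 0 - (1/10::real)"
    by (rule tendsto_le[OF trivial_limit_at_right_real L2 L ev])
  then show False by simp
qed

lemma prop_lt: assumes "\<nu> + (\<alpha> - pi/2) \<le> q" "q < \<nu>" "JJ \<alpha> differentiable (at q)"
  shows "JJ \<alpha> differentiable (at (q + \<alpha>))"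
proof -
  obtain D where "DERIV (JJ \<alpha>) q :> D" using assms(3) real_differentiable_def by blast
  then have "DERIV (JJ \<alpha>) ((q + \<alpha>) - \<alpha>) :> D" by simp
  then have d1: "((\<lambda>y. JJ \<alpha> (y - \<alpha>)) has_field_derivative D * 1) (at (q+\<alpha>))"
    by (rule DERIV_chain2) (auto intro!: derivative_eq_intros)
  have d2: "((\<lambda>y. (JJ \<alpha> (y - \<alpha>) - 1 - sin (y - \<alpha>)^2)/rr) has_field_derivative (D - 2 * sin q * cos q)/rr) (at (q+\<alpha>))"
    using rr_facts by (auto intro!: derivative_eq_intros d1)
  have "(JJ \<alpha> has_field_derivative (D - 2 * sin q * cos q)/rr) (at (q+\<alpha>))"
  proof (rule has_field_derivative_transform_within_open[OF d2, of "{\<nu> + (\<alpha> - pi/2) - 1/20 + \<alpha> <..< \<nu> + \<alpha>}"])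
    show "q + \<alpha> \<in> {\<nu> + (\<alpha> - pi/2) - 1/20 + \<alpha> <..< \<nu> + \<alpha>}" using assms by auto
  next
    fix y assume y: "y \<in> {\<nu> + (\<alpha> - pi/2) - 1/20 + \<alpha> <..< \<nu> + \<alpha>}"
    define x where "x = y - \<alpha> - \<nu>"
    have "JJ \<alpha> (\<nu>+x+\<alpha>) - JJ \<alpha> (\<nu>+x+(\<alpha>-pi/2)) \<le> x / 10"
      using y by (intro Delta_neg) (auto simp: x_def)
    moreover have "x < 0" using y by (auto simp: x_def)
    moreover have "\<nu>+x+\<alpha> = y" "\<nu>+x = y - \<alpha>" by (simp_all add: x_def)
    ultimately have "mm (y - \<alpha>) = JJ \<alpha> y" unfolding mm_def by (simp add: min_def)
    then show "(JJ \<alpha> (y - \<alpha>) - 1 - sin (y - \<alpha>)^2)/rr = JJ \<alpha> y"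
      using bell[of "y - \<alpha>"] rr_facts by (simp add: field_simps)
  qed auto
  then show ?thesis using real_differentiable_def by blast
qed

lemma prop_gt: assumes "\<nu> < q" "q < \<nu> + \<alpha>" "JJ \<alpha> differentiable (at q)"
  shows "JJ \<alpha> differentiable (at (q + (\<alpha> - pi/2)))"
proof -
  obtain D where "DERIV (JJ \<alpha>) q :> D" using assms(3) real_differentiable_def by blast
  then have "DERIV (JJ \<alpha>) ((q + (\<alpha> - pi/2)) - (\<alpha> - pi/2)) :> D" by simp
  then have d1: "((\<lambda>y. JJ \<alpha> (y - (\<alpha> - pi/2))) has_field_derivative D * 1) (at (q + (\<alpha> - pi/2)))"
    by (rule DERIV_chain2) (auto intro!: derivative_eq_intros)
  have d2: "((\<lambda>y. (JJ \<alpha> (y - (\<alpha> - pi/2)) - 1 - sin (y - (\<alpha> - pi/2))^2)/rr) has_field_derivative (D - 2 * sin q * cos q)/rr) (at (q + (\<alpha> - pi/2)))"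
    using rr_facts by (auto intro!: derivative_eq_intros d1)
  have "(JJ \<alpha> has_field_derivative (D - 2 * sin q * cos q)/rr) (at (q + (\<alpha> - pi/2)))"
  proof (rule has_field_derivative_transform_within_open[OF d2, of "{\<nu> + (\<alpha> - pi/2) <..< \<nu> + \<alpha> + 1/20 + (\<alpha> - pi/2)}"])
    show "q + (\<alpha> - pi/2) \<in> {\<nu> + (\<alpha> - pi/2) <..< \<nu> + \<alpha> + 1/20 + (\<alpha> - pi/2)}" using assms by auto
  next
    fix y assume y: "y \<in> {\<nu> + (\<alpha> - pi/2) <..< \<nu> + \<alpha> + 1/20 + (\<alpha> - pi/2)}"
    define x where "x = y - (\<alpha> - pi/2) - \<nu>"
    have "JJ \<alpha> (\<nu>+x+\<alpha>) - JJ \<alpha> (\<nu>+x+(\<alpha>-pi/2)) \<ge> x / 10"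
      using y by (intro Delta_pos) (auto simp: x_def)
    moreover have "x > 0" using y by (auto simp: x_def)
    moreover have "\<nu>+x+(\<alpha>-pi/2) = y" "\<nu>+x = y - (\<alpha> - pi/2)" by (simp_all add: x_def)
    ultimately have "mm (y - (\<alpha> - pi/2)) = JJ \<alpha> y" unfolding mm_def by (simp add: min_def)
    then show "(JJ \<alpha> (y - (\<alpha> - pi/2)) - 1 - sin (y - (\<alpha> - pi/2))^2)/rr = JJ \<alpha> y"
      using bell[of "y - (\<alpha> - pi/2)"] rr_facts by (simp add: field_simps)
  qed auto
  then show ?thesis using real_differentiable_def by blast
qed


lemma nu_in_I: "\<nu> \<in> Iint \<alpha> \<nu>"
  using a1 a2 pi_bounds by (simp add: Iint_def)

lemma T_surj: assumes "y \<in> Iint \<alpha> \<nu>" shows "y \<in> Tmap \<alpha> \<nu> ` Iint \<alpha> \<nu>"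
proof (cases "y < \<nu> + \<alpha> + (\<alpha> - pi/2)")
  case True
  show ?thesis
  proof (rule rev_image_eqI[of "y - (\<alpha> - pi/2)"])
    show "y - (\<alpha> - pi/2) \<in> Iint \<alpha> \<nu>" using assms True a1 a2 pi_bounds by (auto simp: Iint_def)
    show "y = Tmap \<alpha> \<nu> (y - (\<alpha> - pi/2))" using assms True by (auto simp: Tmap_def Iint_def)
  qed
next
  case False
  show ?thesis
  proof (rule rev_image_eqI[of "y - \<alpha>"])
    show "y - \<alpha> \<in> Iint \<alpha> \<nu>" using assms False a1 a2 pi_bounds by (auto simp: Iint_def)
    show "y = Tmap \<alpha> \<nu> (y - \<alpha>)" using assms False a1 a2 pi_bounds by (auto simp: Tmap_def Iint_def)
  qed
qed

lemma Tinv_Suc: "Tinv_iter \<alpha> \<nu> (Suc k) = inv_into (Iint \<alpha> \<nu>) (Tmap \<alpha> \<nu>) (Tinv_iter \<alpha> \<nu> k)"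
  by (simp add: Tinv_iter_def)

lemma main_ind: assumes irr: "\<alpha> / pi \<notin> \<rat>"
  shows "Tinv_iter \<alpha> \<nu> k \<in> Iint \<alpha> \<nu> \<and> (\<exists>n::int. Tinv_iter \<alpha> \<nu> k = \<nu> - real k * \<alpha> + of_int n * (pi/2))
     \<and> \<not> JJ \<alpha> differentiable (at (Tinv_iter \<alpha> \<nu> k))"
proof (induction k)
  case 0
  have "Tinv_iter \<alpha> \<nu> 0 = \<nu>" by (simp add: Tinv_iter_def)
  then show ?case using nu_in_I kink by (auto intro: exI[of _ 0])
next
  case (Suc k)
  define y where "y = Tinv_iter \<alpha> \<nu> k"
  from Suc y_def have yI: "y \<in> Iint \<alpha> \<nu>" and ynd: "\<not> JJ \<alpha> differentiable (at y)" by auto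
  from Suc y_def obtain n :: int where yf: "y = \<nu> - real k * \<alpha> + of_int n * (pi/2)" by auto
  define q where "q = inv_into (Iint \<alpha> \<nu>) (Tmap \<alpha> \<nu>) y"
  have qS: "Tinv_iter \<alpha> \<nu> (Suc k) = q" by (simp add: Tinv_Suc q_def y_def)
  have yT: "y \<in> Tmap \<alpha> \<nu> ` Iint \<alpha> \<nu>" by (rule T_surj[OF yI])
  have qI: "q \<in> Iint \<alpha> \<nu>" unfolding q_def by (rule inv_into_into[OF yT])
  have Tq: "Tmap \<alpha> \<nu> q = y" unfolding q_def by (rule f_inv_into_f[OF yT])
  have qf: "\<exists>n'::int. q = \<nu> - real (Suc k) * \<alpha> + of_int n' * (pi/2)"
  proof (cases "q < \<nu>")
    case True
    then have "q + \<alpha> = y" using Tq by (simp add: Tmap_def)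
    then have "q = \<nu> - real (Suc k) * \<alpha> + of_int n * (pi/2)" using yf by (simp add: algebra_simps)
    then show ?thesis by blast
  next
    case False
    then have "q + (\<alpha> - pi/2) = y" using Tq by (simp add: Tmap_def)
    then have "q = \<nu> - real (Suc k) * \<alpha> + of_int (n + 1) * (pi/2)" using yf by (simp add: algebra_simps)
    then show ?thesis by blast
  qed
  have qne: "q \<noteq> \<nu>"
  proof
    assume "q = \<nu>"
    with qf obtain n' :: int where "\<nu> = \<nu> - real (Suc k) * \<alpha> + of_int n' * (pi/2)" by auto
    then have "real (Suc k) * \<alpha> = of_int n' * (pi/2)" by linarith
    then have "\<alpha> / pi = of_int n' / (real (Suc k) * 2)"
      by (simp add: field_simps del: of_nat_Suc)
    moreover have "of_int n' / (real (Suc k) * 2) \<in> (\<rat> :: real set)"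
      by (intro Rats_divide Rats_of_int Rats_mult Rats_of_nat Rats_number_of)
    ultimately show False using irr by simp
  qed
  have qnd: "\<not> JJ \<alpha> differentiable (at q)"
  proof
    assume qd: "JJ \<alpha> differentiable (at q)"
    show False
    proof (cases "q < \<nu>")
      case True
      then have "Tmap \<alpha> \<nu> q = q + \<alpha>" by (simp add: Tmap_def)
      moreover have "JJ \<alpha> differentiable (at (q + \<alpha>))"
        using qI True qd by (intro prop_lt) (auto simp: Iint_def)
      ultimately show False using Tq ynd by simp
    next
      case False
      then have "Tmap \<alpha> \<nu> q = q + (\<alpha> - pi/2)" by (simp add: Tmap_def)
      moreover have "JJ \<alpha> differentiable (at (q + (\<alpha> - pi/2)))"
        using qI False qne qd by (intro prop_gt) (auto simp: Iint_def)
      ultimately show False using Tq ynd by simp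
    qed
  qed
  show ?case using qS qI qf qnd by simp
qed

end

theorem lemma11:
  fixes \<alpha> \<nu> :: real
  assumes "pi/8 < \<alpha>" "\<alpha> < 3*pi/8"
    and "\<alpha> / pi \<notin> \<rat>"
    and "(pi/4 - \<alpha>) - 0.01 < \<nu>" "\<nu> < (pi/4 - \<alpha>) + 0.01"
    and "DeltaJtilde 0.01 \<alpha> \<nu> = 0"
  shows "\<forall>k::nat. \<not> (Jtilde 0.01 \<alpha>) differentiable (at (Tinv_iter \<alpha> \<nu> k))"
proof
  fix k :: nat
  have n1: "(pi/4 - \<alpha>) - 1/100 < \<nu>" using assms(4) by simp
  have n2: "\<nu> < (pi/4 - \<alpha>) + 1/100" using assms(5) by simp
  have d0: "JJ \<alpha> (\<nu> + \<alpha>) = JJ \<alpha> (\<nu> + (\<alpha> - pi/2))"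
    using assms(6) by (simp add: DeltaJtilde_def JJ_def)
  have e: "JJ \<alpha> = Jtilde 0.01 \<alpha>" by (simp add: fun_eq_iff JJ_def)
  show "\<not> (Jtilde 0.01 \<alpha>) differentiable (at (Tinv_iter \<alpha> \<nu> k))"
    using main_ind[OF assms(1,2) n1 n2 d0 assms(3), of k] unfolding e by blast
qed

end
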